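(* Consider a closed tandem queueing system of $n\ge1$ single-server nodes $1,\dots,n$ with initial buffer contents $r_1,\dots,r_n\in\{0,1,2,\dots\}$, not all equal to $0$, and service times $\tau_{ik}>0$. Let the departure epochs $d_i(k)\in\underline{\mathbb R}$, $k\ge1$, satisfy for all $i$ and $k\ge1$ $$d_i(k)=\tau_{ik}\otimes a_i(k)\oplus\tau_{ik}\otimes d_i(k-1),\qquad a_1(k)=d_n(k-r_1),\quad a_i(k)=d_{i-1}(k-r_i)\ (i=2,\dots,n),$$ with $d_i(0)=0$ and $d_i(k)=\varepsilon$ for $k<0$. Let $M=\max_i r_i\ (\ge1)$, and for $m\ge0$ let $G_m=(g^m_{ij})$ be the $n\times n$ matrix with $g^m_{ij}=0$ if ($j=i+1\le n$ and $r_j=m$) or ($i=n$, $j=1$ and $r_1=m$), and $g^m_{ij}=\varepsilon$ otherwise (for $n=1$ this means $g^m_{11}=0$ iff $r_1=m$). Then the graph associated with $G_0$ is acyclic, and, with $p$ the length of its longest path and $\mathcal T_k=\mathrm{diag}(\tau_{1k},\dots,\tau_{nk})$, for all $k\ge1$ $$\mathbf d(k)=\bigoplus_{m=1}^{M}T_m(k)\otimes\mathbf d(k-m),$$ where $T_1(k)=(E\oplus\mathcal T_k\otimes G_0^T)^p\otimes\mathcal T_k\otimes(E\oplus G_1^T)$ and $T_m(k)=(E\oplus\mathcal T_k\otimes G_0^T)^p\otimes\mathcal T_k\otimes G_m^T$ for $m=2,\dots,M$.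
   Context: Max-plus algebra: on $\underline{\mathbb R}=\mathbb R\cup\{\varepsilon\}$ with $\varepsilon=-\infty$, define $x\oplus y=\max(x,y)$ and $x\otimes y=x+y$ (with $x\otimes\varepsilon=\varepsilon\otimes x=\varepsilon$). For matrices, $(X\oplus Y)_{ij}=x_{ij}\oplus y_{ij}$, $(X\otimes Y)_{ij}=\bigoplus_k x_{ik}\otimes y_{kj}$; matrix–vector products likewise; $\bigoplus$ denotes iterated $\oplus$ (maximum). $E$ is the $n\times n$ identity (diagonal $0$, off-diagonal $\varepsilon$); $X^0=E$, $X^q=X\otimes X^{q-1}$; $X^T$ is the transpose. The graph associated with an $n\times n$ matrix $X$ has vertices $\{1,\dots,n\}$ and an arc $(i,j)$ iff $x_{ij}\ne\varepsilon$ (loops count as cycles); path length = number of arcs. $\mathbf d(k)=(d_1(k),\dots,d_n(k))^T$. *)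

theory Defs
  imports "HOL-Library.Extended_Real"
begin

text \<open>Max-plus algebra over ereal: epsilon = -infinity, oplus = max, otimes = +.
  n x n matrices are functions nat => nat => ereal, indices 1..n.\<close>

type_synonym mpmat = "nat \<Rightarrow> nat \<Rightarrow> ereal"
type_synonym mpvec = "nat \<Rightarrow> ereal"

definition mp_add :: "mpmat \<Rightarrow> mpmat \<Rightarrow> mpmat" where
  "mp_add A B = (\<lambda>i j. max (A i j) (B i j))"

definition mp_mult :: "nat \<Rightarrow> mpmat \<Rightarrow> mpmat \<Rightarrow> mpmat" where
  "mp_mult n A B = (\<lambda>i j. SUP l\<in>{1..n}. A i l + B l j)"

definition mp_mv :: "nat \<Rightarrow> mpmat \<Rightarrow> mpvec \<Rightarrow> mpvec" where
  "mp_mv n A x = (\<lambda>i. SUP l\<in>{1..n}. A i l + x l)"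

definition mp_id :: mpmat where
  "mp_id = (\<lambda>i j. if i = j then 0 else -\<infinity>)"

primrec mp_pow :: "nat \<Rightarrow> mpmat \<Rightarrow> nat \<Rightarrow> mpmat" where
  "mp_pow n A 0 = mp_id"
| "mp_pow n A (Suc q) = mp_mult n A (mp_pow n A q)"

definition mp_transpose :: "mpmat \<Rightarrow> mpmat" where
  "mp_transpose A = (\<lambda>i j. A j i)"

definition mp_diag :: "mpvec \<Rightarrow> mpmat" where
  "mp_diag v = (\<lambda>i j. if i = j then v i else -\<infinity>)"

definition mp_graph :: "nat \<Rightarrow> mpmat \<Rightarrow> (nat \<times> nat) set" where
  "mp_graph n A = {(i, j). i \<in> {1..n} \<and> j \<in> {1..n} \<and> A i j \<noteq> -\<infinity>}"

definition longest_path_len :: "(nat \<times> nat) set \<Rightarrow> nat" where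
  "longest_path_len R = Max {m. \<exists>i j. (i, j) \<in> R ^^ m}"

definition tandem_G :: "nat \<Rightarrow> (nat \<Rightarrow> nat) \<Rightarrow> nat \<Rightarrow> mpmat" where
  "tandem_G n r m = (\<lambda>i j. if (j = i + 1 \<and> j \<le> n \<and> r j = m) \<or> (i = n \<and> j = 1 \<and> r 1 = m)
                           then 0 else -\<infinity>)"

end

theory Submission imports Defs begin

lemma SUP_attain:
  fixes f :: "'a \<Rightarrow> ereal"
  assumes "finite S" "S \<noteq> {}"
  obtains x where "x \<in> S" "(SUP y\<in>S. f y) = f x"
proof -
  have "Sup (f ` S) \<in> f ` S" using assms cSup_eq_Max[of "f ` S"] Max_in[of "f ` S"] by auto
  then show ?thesis using that by auto
qed

lemma add_SUP:
  fixes f :: "'a \<Rightarrow> ereal"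
  assumes "finite S" "S \<noteq> {}"
  shows "a + (SUP x\<in>S. f x) = (SUP x\<in>S. a + f x)"
proof (rule antisym)
  obtain x where x: "x \<in> S" "(SUP y\<in>S. f y) = f x" using SUP_attain[OF assms] by blast
  show "a + (SUP x\<in>S. f x) \<le> (SUP x\<in>S. a + f x)" using x by (auto intro: SUP_upper2)
  show "(SUP x\<in>S. a + f x) \<le> a + (SUP x\<in>S. f x)"
    by (rule SUP_least) (auto intro: add_left_mono SUP_upper)
qed

lemma SUP_add:
  fixes f :: "'a \<Rightarrow> ereal"
  assumes "finite S" "S \<noteq> {}"
  shows "(SUP x\<in>S. f x) + a = (SUP x\<in>S. f x + a)"
  using add_SUP[OF assms, of a f] by (simp add: add.commute)

lemma mv_mult:
  assumes "n \<ge> 1"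
  shows "mp_mv n (mp_mult n A B) w i = mp_mv n A (mp_mv n B w) i"
proof -
  have "mp_mv n (mp_mult n A B) w i = (SUP l\<in>{1..n}. SUP l'\<in>{1..n}. A i l' + B l' l + w l)"
    unfolding mp_mv_def mp_mult_def using assms by (simp add: SUP_add)
  also have "\<dots> = (SUP l'\<in>{1..n}. SUP l\<in>{1..n}. A i l' + (B l' l + w l))"
    by (subst SUP_commute) (simp add: add.assoc)
  also have "\<dots> = mp_mv n A (mp_mv n B w) i"
    unfolding mp_mv_def using assms by (simp add: add_SUP)
  finally show ?thesis .
qed

lemma mv_SUP:
  assumes "n \<ge> 1" "finite S" "S \<noteq> {}"
  shows "(SUP m\<in>S. mp_mv n A (w m) i) = mp_mv n A (\<lambda>j. SUP m\<in>S. w m j) i"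
  unfolding mp_mv_def using assms by (simp add: add_SUP SUP_commute[of _ S])


definition pr :: "nat \<Rightarrow> nat \<Rightarrow> nat" where "pr n i = (if i = 1 then n else i - 1)"
definition vv :: "nat \<Rightarrow> int \<Rightarrow> nat" where "vv n t = nat (t mod int n) + 1"
definition su :: "nat \<Rightarrow> nat \<Rightarrow> nat" where "su n a = (if a = n then 1 else a + 1)"

lemma minf_add[simp]: "(w::ereal) \<noteq> \<infinity> \<Longrightarrow> -\<infinity> + w = -\<infinity>"
  by (cases w) auto

lemma vv_range: assumes "n \<ge> 1" shows "vv n t \<in> {1..n}"
proof -
  have "0 \<le> t mod int n" "t mod int n < int n" using assms by simp_all
  then show ?thesis unfolding vv_def by auto
qed

lemma vv_surj: "a \<in> {1..n} \<Longrightarrow> vv n (int a - 1) = a"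
  unfolding vv_def by auto

lemma mod_succ:
  assumes "n \<ge> 1"
  shows "(t + 1) mod int n = (if t mod int n = int n - 1 then 0 else t mod int n + 1)"
proof -
  have a: "0 \<le> t mod int n" "t mod int n < int n" using assms by simp_all
  have "(t + 1) mod int n = (t mod int n + 1) mod int n" by (simp add: mod_add_left_eq)
  then show ?thesis using a by (auto intro: mod_pos_pos_trivial)
qed

lemma mod_pred:
  assumes "n \<ge> 1"
  shows "(t - 1) mod int n = (if t mod int n = 0 then int n - 1 else t mod int n - 1)"
proof -
  have a: "0 \<le> t mod int n" "t mod int n < int n" using assms by simp_all
  have "(t - 1) mod int n = (t mod int n - 1) mod int n" by (simp add: mod_diff_left_eq)
  then show ?thesis using a
    using zmod_zminus1_eq_if[of 1 "int n"]
    by (cases "n = 1"; cases "t mod int n = 0") (auto intro: mod_pos_pos_trivial simp: mod_minus1_right)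
qed

lemma su_vv: assumes "n \<ge> 1" shows "su n (vv n t) = vv n (t + 1)"
proof -
  have a: "0 \<le> t mod int n" "t mod int n < int n" using assms by simp_all
  show ?thesis
  unfolding vv_def su_def using mod_succ[of n t] a assms
  by (auto simp: nat_diff_distrib Suc_nat_eq_nat_zadd1)
qed

lemma pr_vv: assumes "n \<ge> 1" shows "pr n (vv n t) = vv n (t - 1)"
proof -
  have a: "0 \<le> t mod int n" "t mod int n < int n" using assms by simp_all
  show ?thesis
  proof (cases "t mod int n = 0")
    case True
    then show ?thesis unfolding vv_def pr_def using mod_pred[of n t] a assms by auto
  next
    case False
    then have p: "t mod int n > 0" using a by linarith
    then have "nat (t mod int n) + 1 \<noteq> 1" by simp
    then have "pr n (vv n t) = nat (t mod int n)" unfolding pr_def vv_def by simp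
    also have "\<dots> = vv n (t - 1)" unfolding vv_def using mod_pred[of n t] assms False p
      by (simp add: nat_diff_distrib)
    finally show ?thesis .
  qed
qed

lemma sel:
  fixes w :: "nat \<Rightarrow> ereal"
  assumes "finite S" "j \<in> S" "\<forall>l\<in>S. w l \<noteq> \<infinity>"
  shows "(SUP l\<in>S. (if l = j \<and> P then a else -\<infinity>) + w l) = (if P then a + w j else -\<infinity>)"
proof (rule antisym)
  show "(SUP l\<in>S. (if l = j \<and> P then a else -\<infinity>) + w l) \<le> (if P then a + w j else -\<infinity>)"
    using assms by (intro SUP_least) auto
  show "(if P then a + w j else -\<infinity>) \<le> (SUP l\<in>S. (if l = j \<and> P then a else -\<infinity>) + w l)"
    using assms by (auto intro!: SUP_upper2[of j])
qed


lemma R_iff: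
  assumes "n \<ge> 1"
  shows "(a, b) \<in> mp_graph n (tandem_G n r 0) \<longleftrightarrow> a \<in> {1..n} \<and> b \<in> {1..n} \<and> b = su n a \<and> r b = 0"
  unfolding mp_graph_def tandem_G_def su_def using assms by auto

lemma relpow_char:
  assumes "n \<ge> 1" "(a, b) \<in> (mp_graph n (tandem_G n r 0)) ^^ m"
  shows "m = 0 \<or> (\<exists>t. a = vv n t \<and> b = vv n (t + int m) \<and> (\<forall>u\<in>{1..m}. r (vv n (t + int u)) = 0))"
  using assms(2)
proof (induction m arbitrary: b)
  case 0
  then show ?case by simp
next
  case (Suc m)
  then obtain c where c: "(a, c) \<in> (mp_graph n (tandem_G n r 0)) ^^ m" "(c, b) \<in> mp_graph n (tandem_G n r 0)"
    by auto
  have cb: "c \<in> {1..n}" "b = su n c" "r b = 0" using c(2) R_iff[OF assms(1)] by auto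
  show ?case
  proof (cases "m = 0")
    case True
    then have "a = c" using c by simp
    then show ?thesis using cb True vv_surj[of c n] su_vv[OF assms(1), of "int c - 1"] by (intro disjI2 exI[of _ "int c - 1"]) auto
  next
    case False
    then obtain t where t: "a = vv n t" "c = vv n (t + int m)" "\<forall>u\<in>{1..m}. r (vv n (t + int u)) = 0"
      using Suc.IH c(1) by blast
    have bb: "b = vv n (t + int (Suc m))" using cb t su_vv[OF assms(1), of "t + int m"] by (simp add: algebra_simps)
    moreover have "\<forall>u\<in>{1..Suc m}. r (vv n (t + int u)) = 0"
      using t(3) cb(3) bb by (metis atLeastAtMost_iff le_Suc_eq)
    ultimately show ?thesis using t by blast
  qed
qed

lemma relpow_bound:
  assumes "n \<ge> 1" "\<exists>i\<in>{1..n}. r i \<noteq> 0" "(a, b) \<in> (mp_graph n (tandem_G n r 0)) ^^ m"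
  shows "m < n"
proof (rule ccontr)
  assume "\<not> m < n"
  then have mn: "m \<ge> n" "m \<noteq> 0" using assms(1) by auto
  then obtain t where t: "\<forall>u\<in>{1..m}. r (vv n (t + int u)) = 0"
    using relpow_char[OF assms(1) assms(3)] by blast
  have "r j = 0" if j: "j \<in> {1..n}" for j
  proof -
    define u where "u = nat ((int j - 2 - t) mod int n) + 1"
    have a: "0 \<le> (int j - 2 - t) mod int n" "(int j - 2 - t) mod int n < int n" using assms(1) by simp_all
    then have "u \<in> {1..m}" unfolding u_def using mn by auto
    moreover have "vv n (t + int u) = j"
    proof -
      have "t + int u = t + (int j - 2 - t) mod int n + 1" unfolding u_def using a by simp
      then have "(t + int u) mod int n = (t + (int j - 2 - t) + 1) mod int n"
        by (metis mod_add_left_eq mod_add_right_eq)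
      also have "\<dots> = int j - 1" using j by (auto intro: mod_pos_pos_trivial)
      finally show ?thesis unfolding vv_def using j by (simp add: nat_diff_distrib)
    qed
    ultimately show ?thesis using t by force
  qed
  then show False using assms(2) by auto
qed

lemma chain:
  assumes "n \<ge> 1" "\<forall>u<s. r (vv n (t - int u)) = 0"
  shows "(vv n (t - int s), vv n t) \<in> (mp_graph n (tandem_G n r 0)) ^^ s"
  using assms(2)
proof (induction s arbitrary: t)
  case 0
  then show ?case by simp
next
  case (Suc s)
  have "\<forall>u<s. r (vv n (t - 1 - int u)) = 0" using Suc.prems
    by (metis Suc_less_eq diff_diff_eq of_nat_Suc add.commute)
  then have "(vv n (t - 1 - int s), vv n (t - 1)) \<in> (mp_graph n (tandem_G n r 0)) ^^ s"
    using Suc.IH by blast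
  moreover have "(vv n (t - 1), vv n t) \<in> mp_graph n (tandem_G n r 0)"
    using R_iff[OF assms(1)] vv_range[OF assms(1)] su_vv[OF assms(1), of "t - 1"] Suc.prems
    by force
  ultimately show ?case by (auto simp: algebra_simps)
qed

lemma graph_finite:
  assumes "n \<ge> 1" "\<exists>i\<in>{1..n}. r i \<noteq> 0"
  shows "finite {m. \<exists>i j. (i, j) \<in> (mp_graph n (tandem_G n r 0)) ^^ m}"
  by (rule finite_subset[of _ "{..<n}"]) (use relpow_bound[OF assms] in auto)

lemma graph_acyclic:
  assumes "n \<ge> 1" "\<exists>i\<in>{1..n}. r i \<noteq> 0"
  shows "acyclic (mp_graph n (tandem_G n r 0))"
  unfolding acyclic_def
proof
  fix x
  let ?R = "mp_graph n (tandem_G n r 0)"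
  show "(x, x) \<notin> ?R\<^sup>+"
  proof
    assume "(x, x) \<in> ?R\<^sup>+"
    then obtain m where m: "m > 0" "(x, x) \<in> ?R ^^ m" using trancl_power by blast
    have "(x, x) \<in> ?R ^^ (m * q)" for q
    proof (induction q)
      case 0 then show ?case by simp
    next
      case (Suc q)
      have "?R ^^ (m * Suc q) = ?R ^^ m O ?R ^^ (m * q)" by (simp add: relpow_add)
      then show ?case using m Suc by auto
    qed
    then have "m * n < n" using relpow_bound[OF assms] by blast
    then show False using m by (simp add: mult_less_cancel2)
  qed
qed

lemma no_long_chain:
  assumes "n \<ge> 1" "\<exists>i\<in>{1..n}. r i \<noteq> 0"
  shows "\<exists>u\<le>longest_path_len (mp_graph n (tandem_G n r 0)). r (vv n (t - int u)) \<noteq> 0"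
proof (rule ccontr)
  let ?p = "longest_path_len (mp_graph n (tandem_G n r 0))"
  assume "\<not> ?thesis"
  then have "\<forall>u<Suc ?p. r (vv n (t - int u)) = 0" by auto
  then have "Suc ?p \<in> {m. \<exists>i j. (i, j) \<in> (mp_graph n (tandem_G n r 0)) ^^ m}"
    using chain[OF assms(1)] by blast
  then have "Suc ?p \<le> ?p" unfolding longest_path_len_def using graph_finite[OF assms] by (rule Max_ge[rotated])
  then show False by simp
qed


lemma emax_add: "max (x::ereal) y + z = max (x + z) (y + z)"
  by (cases "x \<le> y") (auto simp: max_def add_right_mono intro: antisym)

lemma sel2:
  fixes w :: "nat \<Rightarrow> ereal"
  assumes "finite S" "j \<in> S" "j2 \<in> S" "\<forall>l\<in>S. w l \<noteq> \<infinity>"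
  shows "(SUP l\<in>S. max (if l = j \<and> True then a else -\<infinity>) (if l = j2 \<and> Q then b else -\<infinity>) + w l)
     = max (a + w j) (if Q then b + w j2 else -\<infinity>)"
proof -
  have "(SUP l\<in>S. max (if l = j \<and> True then a else -\<infinity>) (if l = j2 \<and> Q then b else -\<infinity>) + w l)
     = (SUP l\<in>S. sup ((if l = j \<and> True then a else -\<infinity>) + w l) ((if l = j2 \<and> Q then b else -\<infinity>) + w l))"
    by (simp add: emax_add sup_max)
  also have "\<dots> = sup (SUP l\<in>S. (if l = j \<and> True then a else -\<infinity>) + w l) (SUP l\<in>S. (if l = j2 \<and> Q then b else -\<infinity>) + w l)"
    by (rule Complete_Lattices.SUP_sup_distrib[symmetric])
  also have "\<dots> = max (a + w j) (if Q then b + w j2 else -\<infinity>)"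
    using sel[OF assms(1,2,4), of True a] sel[OF assms(1,3,4), of Q b] by (simp add: sup_max)
  finally show ?thesis .
qed

lemma pr_range: "i \<in> {1..n} \<Longrightarrow> pr n i \<in> {1..n}"
  unfolding pr_def by auto

lemma GT:
  assumes "i \<in> {1..n}" "j \<in> {1..n}"
  shows "mp_transpose (tandem_G n r m) i j = (if j = pr n i \<and> r i = m then 0 else -\<infinity>)"
  using assms unfolding mp_transpose_def tandem_G_def pr_def by auto

lemma mv_cong:
  "(\<And>l. l \<in> {1..n} \<Longrightarrow> z l = z' l) \<Longrightarrow> mp_mv n A z i = mp_mv n A z' i"
  unfolding mp_mv_def by (intro SUP_cong) auto


lemma eadd_max: "(x::ereal) + max y z = max (x + y) (x + z)"
  using emax_add[of y z x] by (simp add: add.commute)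

lemma GT2:
  "Suc 0 \<le> i \<Longrightarrow> i \<le> n \<Longrightarrow> Suc 0 \<le> j \<Longrightarrow> j \<le> n \<Longrightarrow>
   mp_transpose (tandem_G n r m) i j = (if j = pr n i \<and> r i = m then 0 else -\<infinity>)"
  using GT[of i n j r m] by simp

theorem mainTheorem3:
  fixes n :: nat and r :: "nat \<Rightarrow> nat" and \<tau> :: "nat \<Rightarrow> int \<Rightarrow> real"
    and d :: "nat \<Rightarrow> int \<Rightarrow> ereal"
  assumes n_pos: "n \<ge> 1"
    and r_nz: "\<exists>i\<in>{1..n}. r i \<noteq> 0"
    and tau_pos: "\<And>i k. i \<in> {1..n} \<Longrightarrow> k \<ge> 1 \<Longrightarrow> \<tau> i k > 0"
    and d_fin: "\<And>i k. i \<in> {1..n} \<Longrightarrow> d i k \<noteq> \<infinity>"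
    and d_zero: "\<And>i. i \<in> {1..n} \<Longrightarrow> d i 0 = 0"
    and d_neg: "\<And>i k. i \<in> {1..n} \<Longrightarrow> k < 0 \<Longrightarrow> d i k = -\<infinity>"
    and rec1: "\<And>k. k \<ge> 1 \<Longrightarrow>
        d 1 k = max (ereal (\<tau> 1 k) + d n (k - int (r 1))) (ereal (\<tau> 1 k) + d 1 (k - 1))"
    and rec: "\<And>i k. i \<in> {2..n} \<Longrightarrow> k \<ge> 1 \<Longrightarrow>
        d i k = max (ereal (\<tau> i k) + d (i - 1) (k - int (r i))) (ereal (\<tau> i k) + d i (k - 1))"
  shows "acyclic (mp_graph n (tandem_G n r 0)) \<and>
    (let M = Max (r ` {1..n});
         p = longest_path_len (mp_graph n (tandem_G n r 0));
         Tk = (\<lambda>k. mp_diag (\<lambda>i. ereal (\<tau> i k)));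
         P = (\<lambda>k. mp_pow n (mp_add mp_id (mp_mult n (Tk k) (mp_transpose (tandem_G n r 0)))) p);
         T = (\<lambda>m k. if m = 1
                  then mp_mult n (mp_mult n (P k) (Tk k)) (mp_add mp_id (mp_transpose (tandem_G n r 1)))
                  else mp_mult n (mp_mult n (P k) (Tk k)) (mp_transpose (tandem_G n r m)))
     in \<forall>k\<ge>1. \<forall>i\<in>{1..n}.
          d i k = (SUP m\<in>{1..M}. mp_mv n (T m k) (\<lambda>j. d j (k - int m)) i))"
proof -
  let ?R = "mp_graph n (tandem_G n r 0)"
  have acyc: "acyclic ?R" using graph_acyclic n_pos r_nz .
  define M where "M = Max (r ` {1..n})"
  define p where "p = longest_path_len ?R"
  define Tk where "Tk = (\<lambda>k. mp_diag (\<lambda>i. ereal (\<tau> i k)))"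
  define P where "P = (\<lambda>k. mp_pow n (mp_add mp_id (mp_mult n (Tk k) (mp_transpose (tandem_G n r 0)))) p)"
  define Cm where "Cm = (\<lambda>m. if m = 1 then mp_add mp_id (mp_transpose (tandem_G n r 1))
                                else mp_transpose (tandem_G n r m))"
  define T where "T = (\<lambda>m k. if m = 1
                  then mp_mult n (mp_mult n (P k) (Tk k)) (mp_add mp_id (mp_transpose (tandem_G n r 1)))
                  else mp_mult n (mp_mult n (P k) (Tk k)) (mp_transpose (tandem_G n r m)))"
  have Teq: "T m k = mp_mult n (mp_mult n (P k) (Tk k)) (Cm m)" for m k
    unfolding T_def Cm_def by simp
  have fS: "finite {1..n}" "{1..n} \<noteq> {}" using n_pos by auto
  have rM: "r j \<le> M" if "j \<in> {1..n}" for j unfolding M_def using that by simp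
  have M1: "M \<ge> 1" using r_nz rM by fastforce
  have recu: "d j k = max (ereal (\<tau> j k) + d (pr n j) (k - int (r j))) (ereal (\<tau> j k) + d j (k - 1))"
    if "j \<in> {1..n}" "k \<ge> 1" for j k
  proof (cases "j = 1")
    case True then show ?thesis using rec1[OF that(2)] by (simp add: pr_def)
  next
    case False then show ?thesis using rec[of j k] that by (simp add: pr_def)
  qed
  have main: "\<forall>k\<ge>1. \<forall>i\<in>{1..n}. d i k = (SUP m\<in>{1..M}. mp_mv n (T m k) (\<lambda>j. d j (k - int m)) i)"
  proof (intro allI impI ballI)
    fix k :: int and i assume k: "1 \<le> k" and i: "i \<in> {1..n}"
    define x where "x j = d j k" for j
    define b where "b j = max (d j (k-1)) (if r j \<ge> 1 then d (pr n j) (k - int (r j)) else -\<infinity>)" for j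
    define c where "c j = ereal (\<tau> j k) + b j" for j
    have xrec: "x j = (if r j = 0 then max (c j) (ereal (\<tau> j k) + x (pr n j)) else c j)"
      if "j \<in> {1..n}" for j
      using recu[OF that k] unfolding x_def c_def b_def
      by (auto simp: eadd_max max.commute)
    have xfin: "x j \<noteq> \<infinity>" if "j \<in> {1..n}" for j using d_fin that unfolding x_def by blast
    have cx: "c j \<le> x j" if "j \<in> {1..n}" for j using xrec[OF that] by auto
    have cfin: "c j \<noteq> \<infinity>" if "j \<in> {1..n}" for j using cx[OF that] xfin[OF that] by auto
    define U where "U = mp_add mp_id (mp_mult n (Tk k) (mp_transpose (tandem_G n r 0)))"
    have Uent: "U j l = max (if l = j \<and> True then 0 else -\<infinity>) (if l = pr n j \<and> r j = 0 then ereal (\<tau> j k) else -\<infinity>)"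
      if j: "j \<in> {1..n}" and l: "l \<in> {1..n}" for j l
    proof -
      have "mp_mult n (Tk k) (mp_transpose (tandem_G n r 0)) j l
          = (SUP l'\<in>{1..n}. (if l' = j \<and> True then ereal (\<tau> j k) else -\<infinity>) + mp_transpose (tandem_G n r 0) l' l)"
        unfolding mp_mult_def Tk_def mp_diag_def by (intro SUP_cong) auto
      also have "\<dots> = ereal (\<tau> j k) + mp_transpose (tandem_G n r 0) j l"
        by (subst sel) (use j l GT in auto)
      also have "\<dots> = (if l = pr n j \<and> r j = 0 then ereal (\<tau> j k) else -\<infinity>)"
        using GT[OF j l] by simp
      finally show ?thesis unfolding U_def mp_add_def mp_id_def by auto
    qed
    have Ustep: "mp_mv n U w j = max (w j) (if r j = 0 then ereal (\<tau> j k) + w (pr n j) else -\<infinity>)"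
      if w: "\<And>l. l \<in> {1..n} \<Longrightarrow> w l \<noteq> \<infinity>" and j: "j \<in> {1..n}" for w j
    proof -
      have "mp_mv n U w j = (SUP l\<in>{1..n}. max (if l = j \<and> True then 0 else -\<infinity>)
               (if l = pr n j \<and> r j = 0 then ereal (\<tau> j k) else -\<infinity>) + w l)"
        unfolding mp_mv_def by (intro SUP_cong refl) (simp only: Uent[OF j])
      also have "\<dots> = max (w j) (if r j = 0 then ereal (\<tau> j k) + w (pr n j) else -\<infinity>)"
        by (subst sel2) (use j pr_range w in auto)
      finally show ?thesis .
    qed
    define V where "V s = mp_mv n (mp_pow n U s) c" for s
    have V0: "V 0 j = c j" if j: "j \<in> {1..n}" for j
    proof -
      have "V 0 j = (SUP l\<in>{1..n}. (if l = j \<and> True then 0 else -\<infinity>) + c l)"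
        unfolding V_def mp_mv_def mp_pow.simps mp_id_def by (intro SUP_cong) auto
      also have "\<dots> = c j" by (subst sel) (use j cfin in auto)
      finally show ?thesis .
    qed
    have VS: "V (Suc s) j = mp_mv n U (V s) j" for s j
      unfolding V_def mp_pow.simps using mv_mult[OF n_pos] by simp
    have Vle: "\<forall>j\<in>{1..n}. V s j \<le> x j" for s
    proof (induction s)
      case 0 then show ?case using V0 cx by simp
    next
      case (Suc s)
      have fin: "V s l \<noteq> \<infinity>" if "l \<in> {1..n}" for l using Suc that xfin[OF that] by force
      show ?case
      proof
        fix j assume j: "j \<in> {1..n}"
        have "V (Suc s) j = max (V s j) (if r j = 0 then ereal (\<tau> j k) + V s (pr n j) else -\<infinity>)"
          using VS Ustep[OF fin j] by simp
        also have "\<dots> \<le> x j"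
        proof (cases "r j = 0")
          case True
          have "ereal (\<tau> j k) + V s (pr n j) \<le> ereal (\<tau> j k) + x (pr n j)"
            using Suc pr_range[OF j] by (auto intro: add_left_mono)
          moreover have "V s j \<le> x j" using Suc j by auto
          moreover have "ereal (\<tau> j k) + x (pr n j) \<le> x j" using xrec[OF j] True by simp
          ultimately show ?thesis using True by (simp add: order_trans)
        next
          case False then show ?thesis using Suc j by auto
        qed
        finally show "V (Suc s) j \<le> x j" .
      qed
    qed
    have Vfin: "V s l \<noteq> \<infinity>" if "l \<in> {1..n}" for s l using Vle[of s] that xfin[OF that] by force
    have VSe: "V (Suc s) j = max (V s j) (if r j = 0 then ereal (\<tau> j k) + V s (pr n j) else -\<infinity>)"
      if "j \<in> {1..n}" for s j using VS Ustep[OF Vfin that] by simp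
    have Vmono: "\<forall>j\<in>{1..n}. V 0 j \<le> V s j" for s
    proof (induction s)
      case 0 then show ?case by simp
    next
      case (Suc s) then show ?case using VSe by (auto intro: order_trans)
    qed
    have Veq: "\<forall>t. (\<exists>u\<le>s. r (vv n (t - int u)) \<noteq> 0) \<longrightarrow> V s (vv n t) = x (vv n t)" for s
    proof (induction s)
      case 0
      show ?case
      proof (intro allI impI)
        fix t assume "\<exists>u\<le>0. r (vv n (t - int u)) \<noteq> 0"
        then have "r (vv n t) \<noteq> 0" by auto
        then show "V 0 (vv n t) = x (vv n t)" using V0 xrec vv_range[OF n_pos] by auto
      qed
    next
      case (Suc s)
      show ?case
      proof (intro allI impI)
        fix t assume ex: "\<exists>u\<le>Suc s. r (vv n (t - int u)) \<noteq> 0"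
        define j where "j = vv n t"
        have j: "j \<in> {1..n}" unfolding j_def using vv_range[OF n_pos] .
        have up: "V (Suc s) j \<le> x j" using Vle j by blast
        show "V (Suc s) (vv n t) = x (vv n t)"
        proof (cases "r j = 0")
          case False
          then have "V s j = x j" using Suc.IH unfolding j_def by (metis le0 diff_zero of_nat_0)
          then have "x j \<le> V (Suc s) j" using VSe[OF j] by simp
          then show ?thesis using up j_def by simp
        next
          case True
          then obtain u where u: "u \<le> Suc s" "r (vv n (t - int u)) \<noteq> 0" "u \<noteq> 0"
            using ex j_def by (metis diff_zero of_nat_0)
          then have "r (vv n (t - 1 - int (u - 1))) \<noteq> 0" by (simp add: of_nat_diff algebra_simps)
          moreover have "u - 1 \<le> s" using u by simp
          ultimately have "V s (vv n (t - 1)) = x (vv n (t - 1))" using Suc.IH by blast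
          then have e: "V s (pr n j) = x (pr n j)" unfolding j_def using pr_vv[OF n_pos] by simp
          have "x j = max (c j) (ereal (\<tau> j k) + x (pr n j))" using xrec[OF j] True by simp
          also have "\<dots> \<le> V (Suc s) j"
          proof -
            have "c j \<le> V s j" using V0[OF j] Vmono[of s] j by force
            then show ?thesis using VSe[OF j] True e by (auto simp: le_max_iff_disj)
          qed
          finally show ?thesis using up j_def by simp
        qed
      qed
    qed
    have Vp: "V p i = x i"
    proof -
      obtain u where "u \<le> p" "r (vv n (int i - 1 - int u)) \<noteq> 0"
        using no_long_chain[OF n_pos r_nz, of "int i - 1"] unfolding p_def by blast
      then show ?thesis using Veq[of p] vv_surj[OF i] by metis
    qed
    define y where "y m j = mp_mv n (Cm m) (\<lambda>l. d l (k - int m)) j" for m j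
    have yeq: "y m j = (if m = 1 then max (d j (k-1)) (if r j = 1 then d (pr n j) (k-1) else -\<infinity>)
                  else if r j = m then d (pr n j) (k - int m) else -\<infinity>)"
      if j: "j \<in> {1..n}" for m j
    proof (cases "m = 1")
      case True
      have "y m j = (SUP l\<in>{1..n}. max (if l = j \<and> True then 0 else -\<infinity>)
               (if l = pr n j \<and> r j = 1 then 0 else -\<infinity>) + d l (k - 1))"
        unfolding y_def Cm_def mp_mv_def using True
        by (intro SUP_cong) (use j in \<open>auto simp: mp_add_def mp_id_def GT2\<close>)
      also have "\<dots> = max (d j (k-1)) (if r j = 1 then d (pr n j) (k-1) else -\<infinity>)"
        by (subst sel2) (use j pr_range d_fin in auto)
      finally show ?thesis using True by simp
    next
      case False
      have "y m j = (SUP l\<in>{1..n}. (if l = pr n j \<and> r j = m then 0 else -\<infinity>) + d l (k - int m))"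
        unfolding y_def Cm_def mp_mv_def using False
        by (intro SUP_cong) (use j in \<open>auto simp: GT2\<close>)
      also have "\<dots> = (if r j = m then d (pr n j) (k - int m) else -\<infinity>)"
        by (subst sel) (use j pr_range d_fin in auto)
      finally show ?thesis using False by simp
    qed
    have yfin: "y m j \<noteq> \<infinity>" if j: "j \<in> {1..n}" for m j
      using yeq[OF j, of m] d_fin[OF j] d_fin[OF pr_range[OF j]] by (auto simp: max_def)
    have yb: "(SUP m\<in>{1..M}. y m j) = b j" if j: "j \<in> {1..n}" for j
    proof (rule antisym)
      show "(SUP m\<in>{1..M}. y m j) \<le> b j"
      proof (rule SUP_least)
        fix m assume "m \<in> {1..M}"
        then show "y m j \<le> b j" unfolding yeq[OF j] b_def by auto
      qed
      have "d j (k-1) \<le> (SUP m\<in>{1..M}. y m j)"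
        using M1 by (intro SUP_upper2[of 1]) (auto simp: yeq[OF j])
      moreover have "d (pr n j) (k - int (r j)) \<le> (SUP m\<in>{1..M}. y m j)" if "r j \<ge> 1"
        using that rM[OF j] by (intro SUP_upper2[of "r j"]) (auto simp: yeq[OF j])
      ultimately show "b j \<le> (SUP m\<in>{1..M}. y m j)" unfolding b_def by auto
    qed
    have Tm: "mp_mv n (T m k) (\<lambda>j. d j (k - int m)) i = mp_mv n (P k) (\<lambda>j. ereal (\<tau> j k) + y m j) i" for m
    proof -
      have "mp_mv n (T m k) (\<lambda>j. d j (k - int m)) i = mp_mv n (P k) (mp_mv n (Tk k) (y m)) i"
        unfolding Teq y_def using mv_mult[OF n_pos] by (metis)
      also have "\<dots> = mp_mv n (P k) (\<lambda>j. ereal (\<tau> j k) + y m j) i"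
      proof (rule mv_cong)
        fix l assume l: "l \<in> {1..n}"
        have "mp_mv n (Tk k) (y m) l = (SUP l'\<in>{1..n}. (if l' = l \<and> True then ereal (\<tau> l k) else -\<infinity>) + y m l')"
          unfolding mp_mv_def Tk_def mp_diag_def by (intro SUP_cong) auto
        also have "\<dots> = ereal (\<tau> l k) + y m l" by (subst sel) (use l yfin in auto)
        finally show "mp_mv n (Tk k) (y m) l = ereal (\<tau> l k) + y m l" .
      qed
      finally show ?thesis .
    qed
    have "(SUP m\<in>{1..M}. mp_mv n (T m k) (\<lambda>j. d j (k - int m)) i)
        = (SUP m\<in>{1..M}. mp_mv n (P k) (\<lambda>j. ereal (\<tau> j k) + y m j) i)"
      using Tm by simp
    also have "\<dots> = mp_mv n (P k) (\<lambda>j. SUP m\<in>{1..M}. ereal (\<tau> j k) + y m j) i"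
      using M1 by (intro mv_SUP[OF n_pos]) auto
    also have "\<dots> = mp_mv n (P k) c i"
    proof (rule mv_cong)
      fix l assume l: "l \<in> {1..n}"
      show "(SUP m\<in>{1..M}. ereal (\<tau> l k) + y m l) = c l"
        unfolding c_def using M1 add_SUP[of "{1..M}" "ereal (\<tau> l k)" "\<lambda>m. y m l"] yb[OF l] by simp
    qed
    also have "\<dots> = V p i" unfolding V_def P_def U_def by simp
    also have "\<dots> = d i k" using Vp x_def by simp
    finally show "d i k = (SUP m\<in>{1..M}. mp_mv n (T m k) (\<lambda>j. d j (k - int m)) i)" by simp
  qed
  show ?thesis using acyc main unfolding M_def p_def Tk_def P_def T_def Let_def by simp
qed

end
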